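(* For all $n\ge1$, $w(D_{2n})=\frac1{n!}$ and $w(D_{2n+1})=\frac1{\Gamma(n+\frac32)}=\frac1{\sqrt\pi}\cdot\frac{2^{n+1}}{(2n+1)!!}$.
   Context: $\mathcal A$ is the free associative $\mathbb R$-algebra of noncommutative polynomials in symbols $N$ (degree 1) and $\Delta$ (degree 2); the weight $w:\mathcal A\to\mathbb R$ is the algebra homomorphism with $w(I)=1$, $w(N)=2$, $w(\Delta)=-1$. Define $R_{kj},S_{kj}$: $R_{00}=I$, $S_{00}=0$, $R_{kj}=S_{kj}=0$ if $k<0$ or $j<0$, otherwise $R_{kj}=-(N^2+\Delta)R_{k-1,j}+NS_{k-1,j}$, $S_{kj}=\Delta NR_{k-1,j}-\Delta S_{k-1,j}+NR_{k-1,j-1}$. With $\{a,b\}=\frac{\Gamma(a+b+\frac12)}{(a+b)!\Gamma(a+\frac12)}$, $Z_{n+1}=\sum_{j=0}^n\{n+1,j-1\}R_{n+j,j}$, $\alpha_n=\sum_{j=0}^{n+1}\{n,j\}S_{n+j,j}$, the heat content operators are $D_1=\frac2{\sqrt\pi}I$ and, for $n\ge1$, $D_{2n}=\frac1{\sqrt\pi}\sum_{i=1}^n\frac{\Gamma(i+\frac12)\Gamma(n-i+\frac12)}{n!}D_{2i-1}\alpha_{n-i}$, $D_{2n+1}=\frac1{\sqrt\pi}Z_{n+1}+\frac1{\sqrt\pi}\sum_{i=1}^n\frac{i!\Gamma(n-i+\frac12)}{\Gamma(n+\frac32)}D_{2i}\alpha_{n-i}$. *)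

theory Defs
  imports "HOL-Analysis.Analysis" "HOL-Library.Poly_Mapping"
begin

datatype gen = GenN | GenDelta

text \<open>Words in the two letters; the word monoid (concatenation) is written additively so
  that finitely supported real functions on words form the (noncommutative) monoid algebra,
  i.e. the free associative R-algebra on N and Delta.\<close>
datatype word = Word "gen list"

fun word_of :: "word \<Rightarrow> gen list" where "word_of (Word xs) = xs"

instantiation word :: monoid_add
begin
definition zero_word :: word where "zero_word = Word []"
definition plus_word :: "word \<Rightarrow> word \<Rightarrow> word" where
  "plus_word u v = Word (word_of u @ word_of v)"
instance
proof
  fix a b c :: word
  show "a + b + c = a + (b + c)" by (cases a; cases b; cases c) (simp add: plus_word_def)
  show "0 + a = a" by (cases a) (simp add: plus_word_def zero_word_def)
  show "a + 0 = a" by (cases a) (simp add: plus_word_def zero_word_def)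
qed
end

type_synonym ncpoly = "word \<Rightarrow>\<^sub>0 real"

definition cst :: "real \<Rightarrow> ncpoly" where "cst c = Poly_Mapping.single 0 c"
definition gN :: ncpoly where "gN = Poly_Mapping.single (Word [GenN]) 1"
definition gD :: ncpoly where "gD = Poly_Mapping.single (Word [GenDelta]) 1"

fun gen_weight :: "gen \<Rightarrow> real" where
  "gen_weight GenN = 2" | "gen_weight GenDelta = -1"

definition word_weight :: "word \<Rightarrow> real" where
  "word_weight u = prod_list (map gen_weight (word_of u))"

definition wt :: "ncpoly \<Rightarrow> real" where
  "wt p = (\<Sum>u\<in>Poly_Mapping.keys p. Poly_Mapping.lookup p u * word_weight u)"

fun RS :: "nat \<Rightarrow> nat \<Rightarrow> ncpoly \<times> ncpoly" where
  "RS 0 j = (if j = 0 then 1 else 0, 0)"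
| "RS (Suc k) j =
     (- (gN ^ 2 + gD) * fst (RS k j) + gN * snd (RS k j),
      gD * gN * fst (RS k j) - gD * snd (RS k j) + (if j = 0 then 0 else gN * fst (RS k (j - 1))))"

definition Rp :: "nat \<Rightarrow> nat \<Rightarrow> ncpoly" where "Rp k j = fst (RS k j)"
definition Sp :: "nat \<Rightarrow> nat \<Rightarrow> ncpoly" where "Sp k j = snd (RS k j)"

text \<open>The bracket {a,b} = Gamma(a+b+1/2) / ((a+b)! Gamma(a+1/2)), integer arguments
  (only used with a+b >= 0).\<close>
definition brace :: "int \<Rightarrow> int \<Rightarrow> real" where
  "brace a b = Gamma (of_int (a + b) + 1/2) / (fact (nat (a + b)) * Gamma (of_int a + 1/2))"

text \<open>Zp n = Z_{n+1}\<close>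
definition Zp :: "nat \<Rightarrow> ncpoly" where
  "Zp n = (\<Sum>j=0..n. cst (brace (int n + 1) (int j - 1)) * Rp (n + j) j)"

definition alpha :: "nat \<Rightarrow> ncpoly" where
  "alpha n = (\<Sum>j=0..n+1. cst (brace (int n) (int j)) * Sp (n + j) j)"

section \<open>Heat content operators D_m (m >= 1); D 0 is an unused dummy value\<close>

function D :: "nat \<Rightarrow> ncpoly" where
  "D m = (if m = 0 then 0
          else if m = 1 then cst (2 / sqrt pi)
          else if even m then
            (\<Sum>i=1..m div 2. cst (1 / sqrt pi * (Gamma (real i + 1/2) * Gamma (real (m div 2 - i) + 1/2)
                                   / fact (m div 2))) * D (2 * i - 1) * alpha (m div 2 - i))
          else
            cst (1 / sqrt pi) * Zp (m div 2)
            + (\<Sum>i=1..m div 2. cst (1 / sqrt pi * (fact i * Gamma (real (m div 2 - i) + 1/2)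
                                   / Gamma (real (m div 2) + 3/2))) * D (2 * i) * alpha (m div 2 - i)))"
  by auto
termination
  by (relation "Wellfounded.measure id") (auto, presburger)

definition odd_dfact :: "nat \<Rightarrow> nat" where
  "odd_dfact n = (\<Prod>k=0..n. 2 * k + 1)"

end

theory Submission
  imports Defs
begin

lemma ww_zero[simp]: "word_weight 0 = 1"
  by (simp add: word_weight_def zero_word_def)

lemma ww_add: "word_weight (u + v) = word_weight u * word_weight v"
  by (cases u; cases v) (simp add: word_weight_def plus_word_def)

lemma wt_eq:
  assumes "finite S" "Poly_Mapping.keys p \<subseteq> S"
  shows "wt p = (\<Sum>u\<in>S. Poly_Mapping.lookup p u * word_weight u)"
  unfolding wt_def
  by (rule sum.mono_neutral_left) (use assms in \<open>auto simp: in_keys_iff\<close>)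

lemma wt_add: "wt (p + q) = wt p + wt q"
proof -
  let ?S = "Poly_Mapping.keys p \<union> Poly_Mapping.keys q"
  have f: "finite ?S" by simp
  have k: "Poly_Mapping.keys (p + q) \<subseteq> ?S" by (rule keys_add)
  have 1: "wt (p + q) = (\<Sum>u\<in>?S. Poly_Mapping.lookup (p+q) u * word_weight u)"
    by (rule wt_eq[OF f k])
  have 2: "wt p = (\<Sum>u\<in>?S. Poly_Mapping.lookup p u * word_weight u)"
    by (rule wt_eq[OF f]) (rule Un_upper1)
  have 3: "wt q = (\<Sum>u\<in>?S. Poly_Mapping.lookup q u * word_weight u)"
    by (rule wt_eq[OF f]) (rule Un_upper2)
  have 4: "(\<Sum>u\<in>?S. Poly_Mapping.lookup (p+q) u * word_weight u) = (\<Sum>u\<in>?S. Poly_Mapping.lookup p u * word_weight u) + (\<Sum>u\<in>?S. Poly_Mapping.lookup q u * word_weight u)"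
    unfolding sum.distrib[symmetric] by (rule sum.cong) (simp_all only: lookup_add distrib_right)
  show ?thesis using 1 2 3 4 by simp
qed

lemma wt_zero[simp]: "wt 0 = 0" by (simp add: wt_def)

lemma wt_uminus: "wt (- p) = - wt p"
proof -
  have "wt p + wt (- p) = wt (p + - p)" by (rule wt_add[symmetric])
  also have "p + - p = 0" by (rule right_minus)
  finally show ?thesis by simp
qed

lemma wt_diff: "wt (p - q) = wt p - wt q"
  unfolding diff_conv_add_uminus wt_add wt_uminus by simp

lemma wt_sum: "wt (sum f A) = (\<Sum>x\<in>A. wt (f x))"
  by (induction A rule: infinite_finite_induct) (auto simp: wt_add)

lemma wt_single[simp]: "wt (Poly_Mapping.single k a) = a * word_weight k"
  by (cases "a = 0") (simp_all add: wt_def)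

lemma expand: "(p::ncpoly) = (\<Sum>k\<in>Poly_Mapping.keys p. Poly_Mapping.single k (Poly_Mapping.lookup p k))"
proof (rule poly_mapping_eqI)
  fix u
  have "(\<Sum>k\<in>Poly_Mapping.keys p. Poly_Mapping.lookup (Poly_Mapping.single k (Poly_Mapping.lookup p k)) u)
      = (\<Sum>k\<in>Poly_Mapping.keys p. if k = u then Poly_Mapping.lookup p k else 0)"
    by (rule sum.cong) (auto simp: lookup_single when_def)
  also have "\<dots> = Poly_Mapping.lookup p u"
    by (simp add: sum.delta' in_keys_iff)
  finally show "Poly_Mapping.lookup p u = Poly_Mapping.lookup (\<Sum>k\<in>Poly_Mapping.keys p. Poly_Mapping.single k (Poly_Mapping.lookup p k)) u"
    by (simp add: lookup_sum)
qed

lemma wt_mult: "wt (p * q) = wt p * wt q"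
proof -
  have "p * q = (\<Sum>k\<in>Poly_Mapping.keys p. Poly_Mapping.single k (Poly_Mapping.lookup p k))
       * (\<Sum>l\<in>Poly_Mapping.keys q. Poly_Mapping.single l (Poly_Mapping.lookup q l))"
    using expand[of p] expand[of q] by simp
  also have "\<dots> = (\<Sum>k\<in>Poly_Mapping.keys p. \<Sum>l\<in>Poly_Mapping.keys q.
      Poly_Mapping.single (k + l) (Poly_Mapping.lookup p k * Poly_Mapping.lookup q l))"
    by (simp add: sum_product mult_single)
  finally have e: "wt (p * q) = (\<Sum>k\<in>Poly_Mapping.keys p. \<Sum>l\<in>Poly_Mapping.keys q.
      (Poly_Mapping.lookup p k * word_weight k) * (Poly_Mapping.lookup q l * word_weight l))"
    by (simp add: wt_sum ww_add mult_ac)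
  have "wt p * wt q = (\<Sum>k\<in>Poly_Mapping.keys p. \<Sum>l\<in>Poly_Mapping.keys q.
      (Poly_Mapping.lookup p k * word_weight k) * (Poly_Mapping.lookup q l * word_weight l))"
    unfolding wt_def by (rule sum_product)
  with e show ?thesis by simp
qed

lemma wt_one[simp]: "wt 1 = 1"
proof -
  have "(1::ncpoly) = Poly_Mapping.single 0 1" by simp
  then show ?thesis by (metis wt_single ww_zero mult_1)
qed

lemma wt_power: "wt (p ^ k) = wt p ^ k"
  by (induction k) (simp_all add: wt_mult)

lemma wt_cst[simp]: "wt (cst c) = c" by (simp add: cst_def)
lemma wt_gN[simp]: "wt gN = 2" by (simp add: gN_def word_weight_def)
lemma wt_gD[simp]: "wt gD = -1" by (simp add: gD_def word_weight_def)

definition rc :: "nat \<Rightarrow> nat \<Rightarrow> real" where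
  "rc k j = (-1)^k * 4^j * (real (k choose (2*j)) + 2 * real (k choose (2*j+1)))"

definition sc :: "nat \<Rightarrow> nat \<Rightarrow> real" where
  "sc k j = (-1)^k * 4^j * (4 * real (k choose (2*j+1)) - (if j = 0 then 0 else real (k choose (2*j-1)))) / 2"

lemma wt_RS_step:
  "wt (Rp (Suc k) j) = -3 * wt (Rp k j) + 2 * wt (Sp k j)"
  "wt (Sp (Suc k) j) = -2 * wt (Rp k j) + wt (Sp k j) + (if j = 0 then 0 else 2 * wt (Rp k (j-1)))"
  by (simp_all add: Rp_def Sp_def wt_add wt_diff wt_uminus wt_mult wt_power)

lemma rc_sc_step:
  "rc (Suc k) j = -3 * rc k j + 2 * sc k j"
  "sc (Suc k) j = -2 * rc k j + sc k j + (if j = 0 then 0 else 2 * rc k (j-1))"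
proof -
  have "rc (Suc k) j = -3 * rc k j + 2 * sc k j \<and>
        sc (Suc k) j = -2 * rc k j + sc k j + (if j = 0 then 0 else 2 * rc k (j-1))"
  proof (cases j)
    case 0
    then show ?thesis by (simp add: rc_def sc_def field_simps)
  next
    case (Suc i)
    have e1: "2*j = Suc (Suc (2*i))" "2*j+1 = Suc (Suc (Suc (2*i)))" "2*j - 1 = Suc (2*i)"
      "2*(j-1) = 2*i" "2*(j-1)+1 = Suc (2*i)" using Suc by simp_all
    have e2: "(4::real)^j = 4 * 4^i" using Suc by simp
    show ?thesis unfolding rc_def sc_def e1 e2 using Suc
      by (simp add: field_simps)
  qed
  then show "rc (Suc k) j = -3 * rc k j + 2 * sc k j"
    "sc (Suc k) j = -2 * rc k j + sc k j + (if j = 0 then 0 else 2 * rc k (j-1))" by auto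
qed

lemma wt_RS: "wt (Rp k j) = rc k j \<and> wt (Sp k j) = sc k j"
proof (induction k arbitrary: j)
  case 0
  then show ?case by (simp add: Rp_def Sp_def rc_def sc_def)
next
  case (Suc k)
  then show ?case by (simp add: wt_RS_step rc_sc_step)
qed

lemma rat1:
  fixes x y b :: real assumes "x \<ge> 0" "y \<ge> 0" "b \<ge> 0"
  shows "(y+x+1/2)/(y+x+1) * (-4) * ((y+b+x+1)*(y+b+x-2*x)/((2*x+2)*(2*x+1))) / (2*x+3)
     = -(2*y+2*x+1)*(y+b+x+1)*(y+b-x)/((y+x+1)*(x+1)*(2*x+3)) / (2*x+1)"
proof -
  have "y+x+1 \<noteq> 0" "2*x+2 \<noteq> 0" "2*x+1 \<noteq> 0" "2*x+3 \<noteq> 0" "x+1 \<noteq> 0" using assms by linarith+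
  then show ?thesis by (simp add: divide_simps) (simp add: algebra_simps power2_eq_square)
qed

lemma rat2:
  fixes x y x1 :: real assumes "x \<ge> 0" "y \<ge> 1" "x1 = x + 1"
  shows "(y*(2*y+1) - x*(2*x+1)) / (y*(2*y+1)) + -(2*y+2*x+1)*(y+0+x+1)*(y+0-x)/((y+x+1)*(x+1)*(2*x+3))
    = -(2*y+2*x+1)*(y+0+x+1)*(y+0-x)/((y+x+1)*(x+1)*(2*x+3)) * ((y*(2*y+1) - x1*(2*x1+1)) / (y*(2*y+1)))"
proof -
  have "y+x+1 \<noteq> 0" "2*x+3 \<noteq> 0" "x+1 \<noteq> 0" "y \<noteq> 0" "2*y+1 \<noteq> 0" using assms by linarith+
  then show ?thesis unfolding assms(3) by (simp add: divide_simps) (simp add: algebra_simps power2_eq_square)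
qed

lemma rat3:
  fixes x y x1 :: real assumes "x \<ge> 0" "y \<ge> 1" "x1 = x + 1"
  shows "(y+1-x)*(y*(2*y+1)*(2*y+3) + (8*y^2+6*y-1)*x + (4*y-2)*x^2) / (y*(2*y+1)*(2*y+3)*(y+1+x))
     + -(2*y+2*x+1)*(y+1+x+1)*(y+1-x)/((y+x+1)*(x+1)*(2*x+3))
   = -(2*y+2*x+1)*(y+1+x+1)*(y+1-x)/((y+x+1)*(x+1)*(2*x+3))
     * ((y+1-x1)*(y*(2*y+1)*(2*y+3) + (8*y^2+6*y-1)*x1 + (4*y-2)*x1^2) / (y*(2*y+1)*(2*y+3)*(y+1+x1)))"
proof -
  have "y+x+1 \<noteq> 0" "2*x+3 \<noteq> 0" "x+1 \<noteq> 0" "y \<noteq> 0" "2*y+1 \<noteq> 0" "2*y+3 \<noteq> 0" "y+1+x \<noteq> 0" "y+1+(x+1) \<noteq> 0" using assms by linarith+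
  then show ?thesis unfolding assms(3) by (simp add: divide_simps) (simp add: algebra_simps power2_eq_square)
qed

definition G :: "nat \<Rightarrow> real" where "G m = Gamma (real m + 1/2) / fact m"

lemma Gamma_half_pos: "Gamma (real m + 1/2) > 0"
  by (rule Gamma_real_pos) simp

lemma aux3: fixes a g b f :: real shows "(a * g) / (b * f) = g / f * a / b"
  by (simp add: divide_inverse mult_ac)

lemma G_Suc: "G (Suc m) = G m * (real m + 1/2) / (real m + 1)"
proof -
  have pos: "real m + 1/2 > 0" by (simp add: add_nonneg_pos)
  have nn: "real m + 1/2 \<notin> \<int>\<^sub>\<le>\<^sub>0"
    using pos nonpos_Ints_nonpos not_le by blast
  have e: "real (Suc m) + 1/2 = (real m + 1/2) + 1" by simp
  have ga: "Gamma (real (Suc m) + 1/2) = (real m + 1/2) * Gamma (real m + 1/2)"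
    unfolding e by (rule Gamma_plus1[OF nn])
  have fa: "(fact (Suc m) :: real) = (real m + 1) * fact m" by (simp only: fact_Suc of_nat_Suc add.commute)
  have "G (Suc m) = ((real m + 1/2) * Gamma (real m + 1/2)) / ((real m + 1) * fact m)"
    unfolding G_def ga fa ..
  also have "\<dots> = G m * (real m + 1/2) / (real m + 1)"
    unfolding G_def by (rule aux3)
  finally show ?thesis .
qed

definition cr :: "nat \<Rightarrow> nat \<Rightarrow> real" where "cr k j = real (k choose (2*j))"

lemma B1: "Suc m * (k choose Suc m) = (k - m) * (k choose m)"
  using binomial_absorption[of m k] binomial_absorb_comp[of k m] by simp

lemma cr_step: "(2*real j+2)*(2*real j+1) * cr (Suc k) (Suc j) = (real k+1)*(real k - 2*real j) * cr k j"
proof (cases "2*j \<le> k")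
  case True
  have a: "Suc (Suc (2*j)) * (Suc k choose Suc (Suc (2*j))) = Suc k * (k choose Suc (2*j))"
    by (rule Suc_times_binomial)
  have b: "Suc (2*j) * (k choose Suc (2*j)) = (k - 2*j) * (k choose (2*j))" by (rule B1)
  have a': "(2*real j+2) * real (Suc k choose Suc (Suc (2*j))) = (real k + 1) * real (k choose Suc (2*j))"
    using arg_cong[OF a, of real] by (simp add: algebra_simps)
  have b': "(2*real j+1) * real (k choose Suc (2*j)) = (real k - 2*real j) * real (k choose (2*j))"
    using arg_cong[OF b, of real] True by (simp add: of_nat_diff algebra_simps)
  have e: "2 * Suc j = Suc (Suc (2*j))" by simp
  have "(2*real j+2)*(2*real j+1) * real (Suc k choose Suc (Suc (2*j)))
      = (2*real j+1) * ((2*real j+2) * real (Suc k choose Suc (Suc (2*j))))" by (simp only: mult_ac)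
  also have "\<dots> = (2*real j+1) * ((real k + 1) * real (k choose Suc (2*j)))" by (simp only: a')
  also have "\<dots> = (real k+1) * ((2*real j+1) * real (k choose Suc (2*j)))" by (simp only: mult_ac)
  also have "\<dots> = (real k+1) * ((real k - 2*real j) * real (k choose (2*j)))" by (simp only: b')
  finally show ?thesis unfolding cr_def e by (simp only: mult.assoc)
next
  case False
  then show ?thesis by (simp add: cr_def binomial_eq_0)
qed

lemma rc_alt: "(2*real j+1) * rc k j = (-1)^k * 4^j * (2*real k - 2*real j + 1) * cr k j"
proof (cases "2*j \<le> k")
  case True
  have b: "Suc (2*j) * (k choose Suc (2*j)) = (k - 2*j) * (k choose (2*j))" by (rule B1)
  have b': "(2*real j+1) * real (k choose (2*j+1)) = (real k - 2*real j) * real (k choose (2*j))"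
    using arg_cong[OF b, of real] True by (simp add: of_nat_diff algebra_simps)
  have "(2*real j+1) * rc k j = (-1)^k * 4^j * ((2*real j+1) * real (k choose (2*j)) + 2 * ((2*real j+1) * real (k choose (2*j+1))))"
    unfolding rc_def by (simp add: algebra_simps)
  also have "\<dots> = (-1)^k * 4^j * ((2*real j+1) * real (k choose (2*j)) + 2 * ((real k - 2*real j) * real (k choose (2*j))))"
    by (simp only: b')
  also have "\<dots> = (-1)^k * 4^j * (2*real k - 2*real j + 1) * cr k j"
    unfolding cr_def by (simp add: algebra_simps)
  finally show ?thesis .
next
  case False
  then show ?thesis by (simp add: rc_def cr_def binomial_eq_0)
qed

definition H :: "nat \<Rightarrow> nat \<Rightarrow> nat \<Rightarrow> real" where
  "H n a j = G (n+j) * (-1)^j * 4^j * cr (n+a+j) j / (2*real j+1)"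

definition rho :: "nat \<Rightarrow> nat \<Rightarrow> nat \<Rightarrow> real" where
  "rho n a j = -(2*real n+2*real j+1)*(real n+real a+real j+1)*(real n+real a-real j)
      / ((real n+real j+1)*(real j+1)*(2*real j+3))"

lemma aux1: fixes xa xg xs xt xb xc xd :: real
  shows "(xa*xg)*(-1*xs)*(4*xt)*(xb*xc)/xd = (xg*xs*xt*xc)*(xa*(-4)*xb/xd)"
  by (simp add: divide_inverse mult_ac)

lemma aux2: fixes r X d :: real shows "r * (X / d) = X * (r / d)"
  by (simp add: divide_inverse mult_ac)

lemma aux4: fixes d z w c :: real shows "d \<noteq> 0 \<Longrightarrow> d * z = w * c \<Longrightarrow> z = (w/d) * c"
  by (simp add: field_simps)

lemma aux5: fixes g' g a b :: real shows "g' = g * a / b \<Longrightarrow> g' = a / b * g"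
  by simp

lemma H_step: "H n a (Suc j) = rho n a j * H n a j"
proof -
  let ?x = "real j" and ?y = "real n" and ?b = "real a"
  let ?X = "G (n+j) * (-1)^j * 4^j * cr (n+a+j) j"
  have nz: "2*?x+2 \<noteq> 0" "2*?x+1 \<noteq> 0" by linarith+
  have c0: "(2*?x+2)*(2*?x+1) * cr (Suc (n+a+j)) (Suc j) = (?y+?b+?x+1)*(?y+?b+?x-2*?x) * cr (n+a+j) j"
    using cr_step[of j "n+a+j", unfolded of_nat_add] .
  have c: "cr (Suc (n+a+j)) (Suc j) = ((?y+?b+?x+1)*(?y+?b+?x-2*?x)/((2*?x+2)*(2*?x+1))) * cr (n+a+j) j"
    by (rule aux4[OF _ c0]) (use nz in simp)
  have g: "G (Suc (n+j)) = (?y+?x+1/2)/(?y+?x+1) * G (n+j)"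
    by (rule aux5[OF G_Suc[of "n+j", unfolded of_nat_add]])
  have e1: "n + a + Suc j = Suc (n+a+j)" "n + Suc j = Suc (n+j)" "2*real (Suc j)+1 = 2*?x+3" by simp_all
  have "H n a (Suc j) = ((?y+?x+1/2)/(?y+?x+1) * G (n+j)) * (-1 * (-1)^j) * (4 * 4^j)
         * (((?y+?b+?x+1)*(?y+?b+?x-2*?x)/((2*?x+2)*(2*?x+1))) * cr (n+a+j) j) / (2*?x+3)"
    unfolding H_def e1 c g power_Suc ..
  also have "\<dots> = ?X * ((?y+?x+1/2)/(?y+?x+1) * (-4) * ((?y+?b+?x+1)*(?y+?b+?x-2*?x)/((2*?x+2)*(2*?x+1))) / (2*?x+3))"
    by (rule aux1)
  also have "\<dots> = ?X * (rho n a j / (2*?x+1))"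
    unfolding rat1[of ?x ?y ?b, OF of_nat_0_le_iff of_nat_0_le_iff of_nat_0_le_iff] rho_def ..
  also have "\<dots> = rho n a j * H n a j"
    unfolding H_def by (rule aux2[symmetric])
  finally show ?thesis .
qed

lemma gosper:
  fixes T q r :: "nat \<Rightarrow> real"
  assumes "\<And>j. j < N \<Longrightarrow> T (Suc j) = r j * T j" "q 0 = 1"
    "\<And>j. j < N \<Longrightarrow> q j + r j = r j * q (Suc j)"
  shows "J \<le> N \<Longrightarrow> (\<Sum>i\<le>J. T i) = T J * q J"
proof (induction J)
  case 0 then show ?case using assms(2) by simp
next
  case (Suc J)
  then have "J < N" by simp
  have "(\<Sum>i\<le>Suc J. T i) = T J * q J + T (Suc J)" using Suc by simp
  also have "\<dots> = T J * (q J + r J)" using assms(1)[OF \<open>J < N\<close>] by (simp add: algebra_simps)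
  also have "\<dots> = T (Suc J) * q (Suc J)" using assms(1,3)[OF \<open>J < N\<close>] by simp
  finally show ?case .
qed

lemma sum_H0: assumes "n \<ge> 1" shows "(\<Sum>j\<le>n. H n 0 j) = 0"
proof -
  define q where "q j = (real n*(2*real n+1) - real j*(2*real j+1)) / (real n*(2*real n+1))" for j
  have "(\<Sum>j\<le>n. H n 0 j) = H n 0 n * q n"
  proof (rule gosper[where r = "rho n 0"])
    show "q 0 = 1" using assms by (simp add: q_def)
    fix j assume "j < n"
    show "H n 0 (Suc j) = rho n 0 j * H n 0 j" by (rule H_step)
    show "q j + rho n 0 j = rho n 0 j * q (Suc j)"
      unfolding q_def rho_def of_nat_0
      by (rule rat2) (use assms in simp_all)
  qed simp
  also have "q n = 0" by (simp add: q_def)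
  finally show ?thesis by simp
qed

lemma sum_H1: assumes "n \<ge> 1" shows "(\<Sum>j\<le>n+1. H n 1 j) = 0"
proof -
  define q where "q j = (real n+1-real j)*(real n*(2*real n+1)*(2*real n+3) + (8*real n^2+6*real n-1)*real j
      + (4*real n-2)*real j^2) / (real n*(2*real n+1)*(2*real n+3)*(real n+1+real j))" for j
  have "(\<Sum>j\<le>n+1. H n 1 j) = H n 1 (n+1) * q (n+1)"
  proof (rule gosper[where r = "rho n 1"])
    have nz: "real n*(2*real n+1)*(2*real n+3) \<noteq> 0" "real n + 1 \<noteq> 0" using assms by auto
    show "q 0 = 1" using nz by (simp add: q_def)
    fix j assume "j < n+1"
    show "H n 1 (Suc j) = rho n 1 j * H n 1 j" by (rule H_step)
    show "q j + rho n 1 j = rho n 1 j * q (Suc j)"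
      unfolding q_def rho_def of_nat_1
      by (rule rat3) (use assms in simp_all)
  qed simp
  also have "q (n+1) = 0" by (simp add: q_def)
  finally show ?thesis by simp
qed

lemma rc_H: "G (n+j) * rc (n+b+j) j = (-1)^(n+b)*(2*real(n+b)+1) * H n b j"
proof -
  have nz: "2*real j+1 \<noteq> 0" by linarith
  have h: "(2*real j+1) * H n b j = G (n+j) * ((-1)^j*4^j*cr (n+b+j) j)"
    unfolding H_def using nz by simp
  have e: "2*real (n+b+j) - 2*real j + 1 = 2*real(n+b)+1" by simp
  have r: "(2*real j+1) * rc (n+b+j) j = (-1)^(n+b)*(2*real(n+b)+1) * ((-1)^j*4^j*cr (n+b+j) j)"
    using rc_alt[of j "n+b+j"] unfolding e power_add by (simp add: mult_ac)
  have "(2*real j+1) * (G (n+j) * rc (n+b+j) j) = (2*real j+1) * ((-1)^(n+b)*(2*real(n+b)+1) * H n b j)"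
  proof -
    have "(2*real j+1) * (G (n+j) * rc (n+b+j) j) = G (n+j) * ((2*real j+1) * rc (n+b+j) j)" by (simp only: mult_ac)
    also have "\<dots> = (-1)^(n+b)*(2*real(n+b)+1) * (G (n+j) * ((-1)^j*4^j*cr (n+b+j) j))" unfolding r by (simp only: mult_ac)
    also have "\<dots> = (-1)^(n+b)*(2*real(n+b)+1) * ((2*real j+1) * H n b j)" unfolding h ..
    also have "\<dots> = (2*real j+1) * ((-1)^(n+b)*(2*real(n+b)+1) * H n b j)" by (simp only: mult_ac)
    finally show ?thesis .
  qed
  then show ?thesis using nz by simp
qed

lemma brace_Z: "brace (int n + 1) (int j - 1) = G (n+j) / Gamma (real n + 3/2)"
proof -
  have e: "int n + 1 + (int j - 1) = int (n+j)" by simp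
  show ?thesis unfolding brace_def e G_def by (simp add: add_ac nat_int_add)
qed

lemma brace_A: "brace (int n) (int j) = G (n+j) / Gamma (real n + 1/2)"
proof -
  have e: "int n + int j = int (n+j)" by simp
  show ?thesis unfolding brace_def e G_def by (simp add: nat_int_add)
qed

lemma wt_Zp: assumes "n \<ge> 1" shows "wt (Zp n) = 0"
proof -
  have "wt (Zp n) = (\<Sum>j\<in>{0..n}. brace (int n + 1) (int j - 1) * rc (n+j) j)"
    unfolding Zp_def wt_sum by (simp add: wt_mult wt_RS)
  also have "\<dots> = (\<Sum>j\<le>n. ((-1)^n*(2*real n+1) / Gamma (real n + 3/2)) * H n 0 j)"
  proof (rule sum.cong)
    fix j assume "j \<in> {..n}"
    have "G (n+j) * rc (n+0+j) j = (-1)^(n+0)*(2*real(n+0)+1) * H n 0 j" by (rule rc_H)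
    then show "brace (int n + 1) (int j - 1) * rc (n+j) j = ((-1)^n*(2*real n+1) / Gamma (real n + 3/2)) * H n 0 j"
      unfolding brace_Z by simp
  qed (simp add: atLeast0AtMost)
  also have "\<dots> = 0" by (simp only: sum_distrib_left[symmetric] sum_H0[OF assms] mult_zero_right)
  finally show ?thesis .
qed

lemma aux7: fixes xg xG r1 r0 :: real shows "xg \<noteq> 0 \<Longrightarrow> xG/xg * ((r1+3*r0)/2) = (xG*r1 + 3*(xG*r0))/(2*xg)"
  by (simp add: field_simps)

lemma aux8: fixes xg xs xy h1 h0 :: real shows "xg \<noteq> 0 \<Longrightarrow> (-xs*(2*(xy+1)+1)*h1 + 3*(xs*(2*xy+1)*h0))/(2*xg)
   = (-xs*(2*xy+3)/(2*xg))*h1 + (3*xs*(2*xy+1)/(2*xg))*h0"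
  by (simp add: field_simps)

lemma wt_alpha: assumes "n \<ge> 1" shows "wt (alpha n) = 0"
proof -
  have "wt (alpha n) = (\<Sum>j\<in>{0..n+1}. brace (int n) (int j) * sc (n+j) j)"
    unfolding alpha_def wt_sum by (simp add: wt_mult wt_RS)
  also have "\<dots> = (\<Sum>j\<le>n+1. (-((-1)^n)*(2*real n+3) / (2 * Gamma (real n + 1/2))) * H n 1 j
        + (3 * (-1)^n*(2*real n+1) / (2 * Gamma (real n + 1/2))) * H n 0 j)"
  proof (rule sum.cong)
    fix j assume "j \<in> {..n+1}"
    have s: "sc (n+j) j = (rc (Suc (n+j)) j + 3 * rc (n+j) j) / 2"
      using rc_sc_step(1)[of "n+j" j] by simp
    have h1: "G (n+j) * rc (n+1+j) j = (-1)^(n+1)*(2*real(n+1)+1) * H n 1 j" by (rule rc_H)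
    have h0: "G (n+j) * rc (n+0+j) j = (-1)^(n+0)*(2*real(n+0)+1) * H n 0 j" by (rule rc_H)
    have e: "n + 1 + j = Suc (n+j)" by simp
    show "brace (int n) (int j) * sc (n+j) j = (-((-1)^n)*(2*real n+3) / (2 * Gamma (real n + 1/2))) * H n 1 j
        + (3 * (-1)^n*(2*real n+1) / (2 * Gamma (real n + 1/2))) * H n 0 j"
    proof -
      have h1': "G (n+j) * rc (Suc (n+j)) j = -((-1)^n)*(2*(real n+1)+1) * H n 1 j"
        using h1 unfolding e by simp
      have h0': "G (n+j) * rc (n+j) j = (-1)^n*(2*real n+1) * H n 0 j"
        using h0 by simp
      have gnz: "Gamma (real n + 1/2) \<noteq> 0" using Gamma_half_pos[of n] by linarith
      show ?thesis unfolding brace_A s aux7[OF gnz] h1' h0' aux8[OF gnz] ..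
    qed
  qed (simp add: atLeast0AtMost)
  also have "\<dots> = (-((-1)^n)*(2*real n+3) / (2 * Gamma (real n + 1/2))) * (\<Sum>j\<le>n+1. H n 1 j)
        + (3 * (-1)^n*(2*real n+1) / (2 * Gamma (real n + 1/2))) * (\<Sum>j\<le>n+1. H n 0 j)"
    by (simp only: sum.distrib sum_distrib_left)
  also have "(\<Sum>j\<le>n+1. H n 0 j) = 0"
  proof -
    have "(n+0+Suc n choose (2*Suc n)) = 0" by (rule binomial_eq_0) simp
    then have "cr (n+0+Suc n) (Suc n) = 0" unfolding cr_def by (simp only: of_nat_0)
    then have "H n 0 (Suc n) = 0" unfolding H_def by (simp only: mult_zero_right div_0)
    then show ?thesis using sum_H0[OF assms] by simp
  qed
  also have "(\<Sum>j\<le>n+1. H n 1 j) = 0" by (rule sum_H1[OF assms])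
  finally show ?thesis by simp
qed

declare D.simps [simp del]

lemma wt_alpha0: "wt (alpha 0) = 1"
proof -
  have "wt (alpha 0) = (\<Sum>j\<in>{0..1}. brace (int 0) (int j) * sc (0+j) j)"
    unfolding alpha_def wt_sum by (simp add: wt_mult wt_RS)
  also have "\<dots> = brace (int 0) (int 0) * sc 0 0 + brace (int 0) (int 1) * sc 1 1"
    by (simp add: atLeast0AtMost)
  also have "sc 0 0 = 0" by (simp add: sc_def)
  also have "sc 1 1 = 2" by (simp add: sc_def)
  also have "brace (int 0) (int 1) = 1/2"
  proof -
    have "brace (int 0) (int 1) = G 1 / Gamma (real 0 + 1/2)" using brace_A[of 0 1] by simp
    also have "G 1 = G 0 * (1/2)" using G_Suc[of 0] by simp
    also have "G 0 = Gamma (1/2)" by (simp add: G_def)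
    finally show ?thesis by (simp add: Gamma_one_half_real)
  qed
  finally show ?thesis by simp
qed

lemma wt_alpha': "i \<le> n \<Longrightarrow> i \<noteq> n \<Longrightarrow> wt (alpha (n - i)) = 0"
  by (rule wt_alpha) simp

lemma Gamma_32: "Gamma (3/2 :: real) = sqrt pi / 2"
proof -
  have nn: "(1/2::real) \<notin> \<int>\<^sub>\<le>\<^sub>0" using nonpos_Ints_nonpos[of "1/2::real"] by force
  have "Gamma (1/2 + 1 :: real) = 1/2 * Gamma (1/2)" by (rule Gamma_plus1[OF nn])
  then show ?thesis by (simp add: Gamma_one_half_real)
qed

lemma D_even: "n \<ge> 1 \<Longrightarrow> D (2*n) = (\<Sum>i=1..n. cst (1 / sqrt pi * (Gamma (real i + 1/2) * Gamma (real (n - i) + 1/2)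
                                   / fact n)) * D (2 * i - 1) * alpha (n - i))"
  by (subst D.simps) (simp del: D.simps)

lemma D_odd: "n \<ge> 1 \<Longrightarrow> D (2*n+1) = cst (1 / sqrt pi) * Zp n
            + (\<Sum>i=1..n. cst (1 / sqrt pi * (fact i * Gamma (real (n - i) + 1/2)
                                   / Gamma (real n + 3/2))) * D (2 * i) * alpha (n - i))"
  by (subst D.simps) (simp del: D.simps)

lemma sum_single_n:
  fixes f :: "nat \<Rightarrow> real"
  assumes "n \<ge> 1" "\<And>i. i \<in> {1..n} \<Longrightarrow> i \<noteq> n \<Longrightarrow> f i = 0"
  shows "(\<Sum>i=1..n. f i) = f n"
proof -
  have "(\<Sum>i=1..n. f i) = f n + (\<Sum>i\<in>{1..n}-{n}. f i)"
    by (rule sum.remove) (use assms in auto)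
  also have "(\<Sum>i\<in>{1..n}-{n}. f i) = 0" by (rule sum.neutral) (use assms in auto)
  finally show ?thesis by simp
qed

lemma wt_D_main: "m \<ge> 1 \<Longrightarrow> wt (D m) = (if even m then 1 / fact (m div 2) else 1 / Gamma (real (m div 2) + 3/2))"
proof (induction m rule: less_induct)
  case (less m)
  show ?case
  proof (cases "m = 1")
    case True
    then show ?thesis by (subst D.simps) (simp add: Gamma_32 del: D.simps)
  next
    case False
    with less.prems have m2: "m \<ge> 2" by simp
    show ?thesis
    proof (cases "even m")
      case True
      then obtain n where mn: "m = 2*n" by blast
      with m2 have n1: "n \<ge> 1" by simp
      have "wt (D m) = (\<Sum>i=1..n. (1 / sqrt pi * (Gamma (real i + 1/2) * Gamma (real (n - i) + 1/2)
                                   / fact n)) * wt (D (2 * i - 1)) * wt (alpha (n - i)))"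
        unfolding mn D_even[OF n1] wt_sum by (simp add: wt_mult del: D.simps)
      also have "\<dots> = (1 / sqrt pi * (Gamma (real n + 1/2) * Gamma (real (n - n) + 1/2)
                                   / fact n)) * wt (D (2 * n - 1)) * wt (alpha (n - n))"
        by (rule sum_single_n[OF n1]) (auto simp add: wt_alpha' del: D.simps)
      also have "wt (D (2 * n - 1)) = 1 / Gamma (real n + 1/2)"
      proof -
        have "wt (D (2*n-1)) = (if even (2*n-1) then 1 / fact ((2*n-1) div 2) else 1 / Gamma (real ((2*n-1) div 2) + 3/2))"
          by (rule less.IH) (use mn n1 in auto)
        moreover have "odd (2*n-1)" using n1 by simp
        moreover have "(2*n-1) div 2 = n - 1" using n1 by linarith
        moreover have "real (n-1) + 3/2 = real n + 1/2" using n1 by (simp add: of_nat_diff)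
        ultimately show ?thesis by (simp add: add_ac)
      qed
      finally have "wt (D m) = 1 / fact n"
        using Gamma_half_pos[of n] by (simp add: wt_alpha0 Gamma_one_half_real del: D.simps)
      then show ?thesis using mn by simp
    next
      case False
      then obtain n where mn: "m = 2*n+1" using oddE by blast
      with m2 have n1: "n \<ge> 1" by simp
      have "wt (D m) = 1 / sqrt pi * wt (Zp n) + (\<Sum>i=1..n. (1 / sqrt pi * (fact i * Gamma (real (n - i) + 1/2)
                                   / Gamma (real n + 3/2))) * wt (D (2 * i)) * wt (alpha (n - i)))"
        unfolding mn D_odd[OF n1] wt_add wt_sum by (simp add: wt_mult del: D.simps)
      also have "wt (Zp n) = 0" by (rule wt_Zp[OF n1])
      also have "(\<Sum>i=1..n. (1 / sqrt pi * (fact i * Gamma (real (n - i) + 1/2)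
                                   / Gamma (real n + 3/2))) * wt (D (2 * i)) * wt (alpha (n - i)))
          = (1 / sqrt pi * (fact n * Gamma (real (n - n) + 1/2)
                                   / Gamma (real n + 3/2))) * wt (D (2 * n)) * wt (alpha (n - n))"
        by (rule sum_single_n[OF n1]) (auto simp add: wt_alpha' del: D.simps)
      also have "wt (D (2 * n)) = 1 / fact n"
      proof -
        have "wt (D (2*n)) = (if even (2*n) then 1 / fact ((2*n) div 2) else 1 / Gamma (real ((2*n) div 2) + 3/2))"
          by (rule less.IH) (use mn n1 in auto)
        then show ?thesis by simp
      qed
      finally have "wt (D m) = 1 / Gamma (real n + 3/2)"
        by (simp add: wt_alpha0 Gamma_one_half_real del: D.simps)
      then show ?thesis using mn by simp
    qed
  qed
qed

lemma Gamma_dfact: "Gamma (real n + 3/2) = sqrt pi * real (odd_dfact n) / 2^(n+1)"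
proof (induction n)
  case 0
  then show ?case by (simp add: Gamma_32 odd_dfact_def)
next
  case (Suc n)
  have nn: "real n + 3/2 \<notin> \<int>\<^sub>\<le>\<^sub>0" using nonpos_Ints_nonpos[of "real n + 3/2"] by force
  have e: "real (Suc n) + 3/2 = (real n + 3/2) + 1" by simp
  have g: "Gamma (real (Suc n) + 3/2) = (real n + 3/2) * Gamma (real n + 3/2)"
    unfolding e by (rule Gamma_plus1[OF nn])
  have o: "odd_dfact (Suc n) = odd_dfact n * (2*n+3)"
    unfolding odd_dfact_def by (simp add: algebra_simps)
  show ?case unfolding g Suc o by (simp add: field_simps)
qed

theorem proposition5p1:
  fixes n :: nat
  assumes "n \<ge> 1"
  shows "wt (D (2 * n)) = 1 / fact n
         \<and> wt (D (2 * n + 1)) = 1 / Gamma (real n + 3/2)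
         \<and> 1 / Gamma (real n + 3/2) = 1 / sqrt pi * (2 ^ (n + 1) / real (odd_dfact n))"
proof (intro conjI)
  show "wt (D (2 * n)) = 1 / fact n" using wt_D_main[of "2*n"] assms by simp
  show "wt (D (2 * n + 1)) = 1 / Gamma (real n + 3/2)" using wt_D_main[of "2*n+1"] by simp
  show "1 / Gamma (real n + 3/2) = 1 / sqrt pi * (2 ^ (n + 1) / real (odd_dfact n))"
    unfolding Gamma_dfact by simp
qed

end
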